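(* Let $G_{FL}=(\omega^{<\omega},c_{00}(\omega))$ and equip $c_{00}(\omega)$ with the ultrametric $d(R,R')=\frac{1}{\Delta(R,R')+1}$ for $R\neq R'$ and $d(R,R)=0$. The map $\varphi\colon \mathrm{Aut}(G_{FL})\to \mathrm{Iso}(c_{00}(\omega),d)$, $\varphi(f)=\bar f|_{c_{00}(\omega)}$, is a well-defined group isomorphism from the automorphism group of $G_{FL}$ in $\mathbf{Games}_A$ onto the group of surjective isometries of $(c_{00}(\omega),d)$ onto itself.
   Context: $c_{00}(\omega)$ is the set of eventually zero sequences in $\omega^\omega$; for distinct $R,R'\in\omega^\omega$, $\Delta(R,R')=\min\{n<\omega:R(n)\neq R'(n)\}$. A map $f\colon\omega^{<\omega}\to\omega^{<\omega}$ is chronological if $|f(t)|=|t|$ and $f(t\restriction k)=f(t)\restriction k$ for all $t$ and $k\le|t|$ (with $|t|$ the length and $t\restriction k$ the initial segment of length $k$); it induces $\bar f\colon\omega^\omega\to\omega^\omega$ with $\bar f(R)\restriction n=f(R\restriction n)$. An automorphism of $G_{FL}$ in $\mathbf{Games}_A$ is a bijective chronological map $f\colon\omega^{<\omega}\to\omega^{<\omega}$ with $\bar f[c_{00}(\omega)]=c_{00}(\omega)$; the group operation is composition. *)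

theory Defs
  imports Complex_Main "HOL-Algebra.Group" "HOL-Library.FuncSet"
begin

text \<open>omega^omega is nat => nat; omega^{<omega} is nat list.\<close>

definition c00 :: "(nat \<Rightarrow> nat) set" where
  "c00 = {R. finite {n. R n \<noteq> 0}}"

definition Delta :: "(nat \<Rightarrow> nat) \<Rightarrow> (nat \<Rightarrow> nat) \<Rightarrow> nat" where
  "Delta R R' = (LEAST n. R n \<noteq> R' n)"

definition dist00 :: "(nat \<Rightarrow> nat) \<Rightarrow> (nat \<Rightarrow> nat) \<Rightarrow> real" where
  "dist00 R R' = (if R = R' then 0 else 1 / (real (Delta R R') + 1))"

definition chronological :: "(nat list \<Rightarrow> nat list) \<Rightarrow> bool" where
  "chronological f \<longleftrightarrow>
     (\<forall>t. length (f t) = length t \<and> (\<forall>k \<le> length t. f (take k t) = take k (f t)))"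

text \<open>Induced map: fbar f R restricted to n equals f (R restricted to n).\<close>
definition fbar :: "(nat list \<Rightarrow> nat list) \<Rightarrow> (nat \<Rightarrow> nat) \<Rightarrow> (nat \<Rightarrow> nat)" where
  "fbar f R = (\<lambda>n. f (map R [0..<Suc n]) ! n)"

definition AutFL :: "(nat list \<Rightarrow> nat list) set" where
  "AutFL = {f. bij f \<and> chronological f \<and> fbar f ` c00 = c00}"

definition AutFL_group :: "(nat list \<Rightarrow> nat list) monoid" where
  "AutFL_group = \<lparr>carrier = AutFL, mult = (\<circ>), one = id\<rparr>"

definition Iso00 :: "((nat \<Rightarrow> nat) \<Rightarrow> (nat \<Rightarrow> nat)) set" where
  "Iso00 = {g. g \<in> extensional c00 \<and> bij_betw g c00 c00 \<and>
              (\<forall>R\<in>c00. \<forall>R'\<in>c00. dist00 (g R) (g R') = dist00 R R')}"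

definition Iso00_group :: "((nat \<Rightarrow> nat) \<Rightarrow> (nat \<Rightarrow> nat)) monoid" where
  "Iso00_group = \<lparr>carrier = Iso00, mult = compose c00, one = restrict id c00\<rparr>"

definition phi :: "(nat list \<Rightarrow> nat list) \<Rightarrow> ((nat \<Rightarrow> nat) \<Rightarrow> (nat \<Rightarrow> nat))" where
  "phi f = restrict (fbar f) c00"

end

theory Submission
  imports Defs
begin

definition pre :: "(nat \<Rightarrow> nat) \<Rightarrow> nat \<Rightarrow> nat list" where
  "pre R n = map R [0..<n]"

lemma pre_eq_iff: "pre R n = pre R' n \<longleftrightarrow> (\<forall>i<n. R i = R' i)"
  by (auto simp: pre_def)

lemma length_pre[simp]: "length (pre R n) = n"
  by (simp add: pre_def)

lemma take_pre: "k \<le> n \<Longrightarrow> take k (pre R n) = pre R k"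
  by (simp add: pre_def take_map)

lemma pre_nth: "i < n \<Longrightarrow> pre R n ! i = R i"
  by (simp add: pre_def)

lemma fun_eq_pre: "(\<forall>n. pre R n = pre R' n) \<longleftrightarrow> R = R'"
  by (auto simp: pre_eq_iff)

lemma fbar_alt: "fbar f R n = f (pre R (Suc n)) ! n"
  by (simp add: fbar_def pre_def)

lemma chron_len: "chronological f \<Longrightarrow> length (f t) = length t"
  by (simp add: chronological_def)

lemma chron_take: "chronological f \<Longrightarrow> k \<le> length t \<Longrightarrow> f (take k t) = take k (f t)"
  by (simp add: chronological_def)

lemma pre_fbar:
  assumes c: "chronological f"
  shows "pre (fbar f R) n = f (pre R n)"
proof (rule nth_equalityI)
  show "length (pre (fbar f R) n) = length (f (pre R n))" using chron_len[OF c] by simp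
next
  fix i assume "i < length (pre (fbar f R) n)"
  then have i: "i < n" by simp
  have "f (pre R (Suc i)) = take (Suc i) (f (pre R n))"
    using chron_take[OF c, of "Suc i" "pre R n"] i take_pre[of "Suc i" n R] by simp
  then have "f (pre R (Suc i)) ! i = f (pre R n) ! i" using i by simp
  then show "pre (fbar f R) n ! i = f (pre R n) ! i"
    using i by (simp add: pre_nth fbar_alt)
qed

lemma fbar_comp:
  assumes "chronological g"
  shows "fbar (f \<circ> g) R = fbar f (fbar g R)"
  by (rule ext) (simp add: fbar_alt pre_fbar[OF assms])

lemma fbar_id: "fbar id R = R"
  by (rule ext) (simp add: fbar_alt pre_nth)

lemma fbar_id': "fbar id = id"
  using fbar_id by auto

lemma pre_Delta:
  assumes "R \<noteq> R'"
  shows "pre R n = pre R' n \<longleftrightarrow> n \<le> Delta R R'"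
proof -
  obtain m where m: "R m \<noteq> R' m" using assms by auto
  show ?thesis
  proof
    assume "pre R n = pre R' n"
    hence "\<forall>i<n. R i = R' i" by (simp add: pre_eq_iff)
    moreover have "R (Delta R R') \<noteq> R' (Delta R R')"
      unfolding Delta_def by (rule LeastI[of _ m]) (rule m)
    ultimately show "n \<le> Delta R R'" by (meson not_le)
  next
    assume "n \<le> Delta R R'"
    then show "pre R n = pre R' n"
    proof (unfold pre_eq_iff, intro allI impI)
      fix i assume "i < n"
      then have "i < Delta R R'" using \<open>n \<le> Delta R R'\<close> by simp
      then show "R i = R' i" unfolding Delta_def using not_less_Least by blast
    qed
  qed
qed

lemma dist00_zero: "dist00 R R' = 0 \<longleftrightarrow> R = R'"
  by (simp add: dist00_def)

lemma dist_agree: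
  assumes "dist00 A B = dist00 C D"
  shows "pre A n = pre B n \<longleftrightarrow> pre C n = pre D n"
proof (cases "A = B")
  case True
  then have "C = D" using assms dist00_zero by metis
  then show ?thesis using True by simp
next
  case False
  then have "C \<noteq> D" using assms dist00_zero by metis
  have "1 / (real (Delta A B) + 1) = 1 / (real (Delta C D) + 1)"
    using assms False \<open>C \<noteq> D\<close> by (simp add: dist00_def)
  then have "Delta A B = Delta C D" by (simp add: field_simps)
  then show ?thesis using pre_Delta[OF False] pre_Delta[OF \<open>C \<noteq> D\<close>] by simp
qed

lemma agree_dist:
  assumes "\<And>n. pre A n = pre B n \<longleftrightarrow> pre C n = pre D n"
  shows "dist00 A B = dist00 C D"
proof (cases "A = B")
  case True
  then have "C = D" using assms fun_eq_pre by metis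
  then show ?thesis using True by (simp add: dist00_def)
next
  case False
  then have F2: "C \<noteq> D" using assms fun_eq_pre by metis
  have "Delta A B \<le> Delta C D"
    using assms[of "Delta A B"] pre_Delta[OF False] pre_Delta[OF F2] by simp
  moreover have "Delta C D \<le> Delta A B"
    using assms[of "Delta C D"] pre_Delta[OF False] pre_Delta[OF F2] by simp
  ultimately show ?thesis using False F2 by (simp add: dist00_def)
qed

lemma fbar_id2[simp]: "fbar (\<lambda>a. a) R = R"
  using fbar_id by (simp add: id_def)

lemma chron_comp:
  assumes "chronological f" "chronological g"
  shows "chronological (f \<circ> g)"
  using assms unfolding chronological_def by simp

lemma chron_inv:
  assumes b: "bij f" and c: "chronological f"
  shows "chronological (inv_into UNIV f)"
  unfolding chronological_def
proof (intro allI conjI impI)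
  fix t
  have ft: "f (inv_into UNIV f t) = t" using b by (simp add: bij_is_surj surj_f_inv_f)
  show "length (inv_into UNIV f t) = length t" using chron_len[OF c, of "inv_into UNIV f t"] ft by simp
  fix k assume k: "k \<le> length t"
  have "f (take k (inv_into UNIV f t)) = take k t"
    using chron_take[OF c, of k "inv_into UNIV f t"] chron_len[OF c, of "inv_into UNIV f t"] k ft by simp
  then show "inv_into UNIV f (take k t) = take k (inv_into UNIV f t)"
    using b by (metis bij_is_inj inv_f_f)
qed

lemma AutFL_D:
  assumes "f \<in> AutFL"
  shows "bij f" "chronological f" "fbar f ` c00 = c00"
  using assms by (auto simp: AutFL_def)

lemma AutFL_comp:
  assumes "f \<in> AutFL" "g \<in> AutFL"
  shows "f \<circ> g \<in> AutFL"
proof -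
  have "fbar (f \<circ> g) = fbar f \<circ> fbar g"
    using fbar_comp[OF AutFL_D(2)[OF assms(2)]] by auto
  then have "fbar (f \<circ> g) ` c00 = fbar f ` (fbar g ` c00)"
    by (simp add: image_comp)
  then have "fbar (f \<circ> g) ` c00 = c00"
    using AutFL_D(3)[OF assms(1)] AutFL_D(3)[OF assms(2)] by simp
  then show ?thesis
    using assms AutFL_D[OF assms(1)] AutFL_D[OF assms(2)]
    by (simp add: AutFL_def bij_comp chron_comp)
qed

lemma fbar_inv_l:
  assumes "bij f" "chronological f"
  shows "fbar (inv_into UNIV f) (fbar f R) = R"
proof -
  have "fbar (inv_into UNIV f) (fbar f R) = fbar (inv_into UNIV f \<circ> f) R"
    using fbar_comp[OF assms(2)] by simp
  also have "inv_into UNIV f \<circ> f = id" using assms(1) by (simp add: bij_is_inj)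
  finally show ?thesis by (simp add: fbar_id)
qed

lemma fbar_inv_r:
  assumes "bij f" "chronological f"
  shows "fbar f (fbar (inv_into UNIV f) R) = R"
proof -
  have "fbar f (fbar (inv_into UNIV f) R) = fbar (f \<circ> inv_into UNIV f) R"
    using fbar_comp[OF chron_inv[OF assms]] by simp
  also have "f \<circ> inv_into UNIV f = id" using assms(1)
    by (simp add: bij_is_surj surj_f_inv_f fun_eq_iff)
  finally show ?thesis by (simp add: fbar_id)
qed

lemma AutFL_inv:
  assumes "f \<in> AutFL"
  shows "inv_into UNIV f \<in> AutFL"
proof -
  note D = AutFL_D[OF assms]
  have "fbar (inv_into UNIV f) ` c00 = fbar (inv_into UNIV f) ` (fbar f ` c00)" using D(3) by simp
  also have "\<dots> = c00" using fbar_inv_l[OF D(1,2)] by (simp add: image_image)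
  finally show ?thesis using D by (simp add: AutFL_def bij_imp_bij_inv chron_inv)
qed

lemma group_AutFL: "group AutFL_group"
proof (rule groupI)
  show "\<one>\<^bsub>AutFL_group\<^esub> \<in> carrier AutFL_group"
    by (simp add: AutFL_group_def AutFL_def chronological_def fbar_id')
next
  fix x assume "x \<in> carrier AutFL_group"
  then have x: "x \<in> AutFL" by (simp add: AutFL_group_def)
  have "inv_into UNIV x \<circ> x = id" using AutFL_D(1)[OF x] by (simp add: bij_is_inj)
  then show "\<exists>y\<in>carrier AutFL_group. y \<otimes>\<^bsub>AutFL_group\<^esub> x = \<one>\<^bsub>AutFL_group\<^esub>"
    using AutFL_inv[OF x] by (auto simp: AutFL_group_def)
qed (auto simp: AutFL_group_def AutFL_comp o_assoc)

lemma Iso00_D: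
  assumes "g \<in> Iso00"
  shows "g \<in> extensional c00" "bij_betw g c00 c00"
    "\<And>R R'. R \<in> c00 \<Longrightarrow> R' \<in> c00 \<Longrightarrow> dist00 (g R) (g R') = dist00 R R'"
  using assms by (auto simp: Iso00_def)

lemma Iso00_mem: "g \<in> Iso00 \<Longrightarrow> R \<in> c00 \<Longrightarrow> g R \<in> c00"
  using Iso00_D(2) bij_betwE by blast

lemma Iso00_comp:
  assumes "g \<in> Iso00" "h \<in> Iso00"
  shows "compose c00 g h \<in> Iso00"
proof -
  have "bij_betw (compose c00 g h) c00 c00"
    using bij_betw_compose Iso00_D(2)[OF assms(1)] Iso00_D(2)[OF assms(2)] by blast
  moreover have "dist00 (compose c00 g h R) (compose c00 g h R') = dist00 R R'"
    if "R \<in> c00" "R' \<in> c00" for R R'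
    using that Iso00_D(3)[OF assms(1)] Iso00_D(3)[OF assms(2)] Iso00_mem[OF assms(2)]
    by (simp add: compose_eq)
  ultimately show ?thesis by (simp add: Iso00_def)
qed

lemma Iso00_inv:
  assumes "g \<in> Iso00"
  shows "restrict (inv_into c00 g) c00 \<in> Iso00"
    "compose c00 (restrict (inv_into c00 g) c00) g = restrict id c00"
proof -
  note D = Iso00_D[OF assms]
  have b: "bij_betw (inv_into c00 g) c00 c00" using D(2) by (rule bij_betw_inv_into)
  then have b2: "bij_betw (restrict (inv_into c00 g) c00) c00 c00"
    by (rule bij_betw_cong[THEN iffD1, rotated]) simp
  have m: "inv_into c00 g R \<in> c00" if "R \<in> c00" for R
    using b that bij_betwE by blast
  have fi: "g (inv_into c00 g R) = R" if "R \<in> c00" for R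
    using D(2) that by (simp add: bij_betw_inv_into_right)
  have "dist00 (restrict (inv_into c00 g) c00 R) (restrict (inv_into c00 g) c00 R') = dist00 R R'"
    if "R \<in> c00" "R' \<in> c00" for R R'
    using D(3)[OF m[OF that(1)] m[OF that(2)]] that fi by simp
  then show "restrict (inv_into c00 g) c00 \<in> Iso00" using b2 by (simp add: Iso00_def)
  have "inv_into c00 g (g R) = R" if "R \<in> c00" for R
    using D(2) that by (simp add: bij_betw_imp_inj_on inv_into_f_f)
  then show "compose c00 (restrict (inv_into c00 g) c00) g = restrict id c00"
    using D(2) by (auto simp: compose_def fun_eq_iff bij_betwE Iso00_mem[OF assms])
qed

lemma group_Iso00: "group Iso00_group"
proof (rule groupI)
  show "\<one>\<^bsub>Iso00_group\<^esub> \<in> carrier Iso00_group"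
    by (simp add: Iso00_group_def Iso00_def bij_betw_def inj_on_def)
next
  fix x assume "x \<in> carrier Iso00_group"
  then have x: "x \<in> Iso00" by (simp add: Iso00_group_def)
  show "\<exists>y\<in>carrier Iso00_group. y \<otimes>\<^bsub>Iso00_group\<^esub> x = \<one>\<^bsub>Iso00_group\<^esub>"
    using Iso00_inv[OF x] by (auto simp: Iso00_group_def)
next
  fix x assume "x \<in> carrier Iso00_group"
  then have x: "x \<in> Iso00" by (simp add: Iso00_group_def)
  have "compose c00 (\<lambda>y\<in>c00. y) x = x"
    by (rule Id_compose) (auto simp: Iso00_D(1)[OF x] Iso00_mem[OF x])
  then show "\<one>\<^bsub>Iso00_group\<^esub> \<otimes>\<^bsub>Iso00_group\<^esub> x = x"
    by (simp add: Iso00_group_def id_def)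
next
  fix x y z assume "x \<in> carrier Iso00_group" "y \<in> carrier Iso00_group" "z \<in> carrier Iso00_group"
  then have z: "z \<in> Iso00" by (simp_all add: Iso00_group_def)
  have "z \<in> c00 \<rightarrow> c00" using Iso00_mem[OF z] by auto
  then show "x \<otimes>\<^bsub>Iso00_group\<^esub> y \<otimes>\<^bsub>Iso00_group\<^esub> z =
       x \<otimes>\<^bsub>Iso00_group\<^esub> (y \<otimes>\<^bsub>Iso00_group\<^esub> z)"
    by (simp add: Iso00_group_def compose_assoc)
qed (simp add: Iso00_group_def Iso00_comp)

definition ext0 :: "nat list \<Rightarrow> nat \<Rightarrow> nat" where
  "ext0 t = (\<lambda>i. if i < length t then t ! i else 0)"

lemma ext0_c00: "ext0 t \<in> c00"
proof -
  have "{n. ext0 t n \<noteq> 0} \<subseteq> {..<length t}" by (auto simp: ext0_def split: if_splits)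
  then show ?thesis unfolding c00_def using finite_subset by blast
qed

lemma pre_ext0: "pre (ext0 t) (length t) = t"
  by (rule nth_equalityI) (auto simp: pre_nth ext0_def)

lemma pre_ext0_take: "k \<le> length t \<Longrightarrow> pre (ext0 (take k t)) k = pre (ext0 t) k"
  by (auto simp: pre_eq_iff ext0_def)

lemma pre_ext0_pre: "pre (ext0 (pre R n)) n = pre R n"
  using pre_ext0[of "pre R n"] by simp

lemma pre_ext0_pre': "pre (ext0 (pre R n)) n = pre R' n \<longleftrightarrow> pre R n = pre R' n"
  using pre_ext0_pre by metis

lemma fbar_inj:
  assumes "bij f" "chronological f"
  shows "inj (fbar f)"
  by (metis assms fbar_inv_l injI)

lemma phi_Iso00:
  assumes f: "f \<in> AutFL"
  shows "phi f \<in> Iso00"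
proof -
  note D = AutFL_D[OF f]
  have "bij_betw (fbar f) c00 c00"
    using D(3) fbar_inj[OF D(1,2)] by (simp add: bij_betw_def inj_on_subset[of _ UNIV])
  then have b: "bij_betw (phi f) c00 c00" unfolding phi_def
    by (rule bij_betw_cong[THEN iffD1, rotated]) simp
  have "dist00 (fbar f R) (fbar f R') = dist00 R R'" for R R'
  proof (rule agree_dist)
    fix n
    have "pre (fbar f R) n = pre (fbar f R') n \<longleftrightarrow> f (pre R n) = f (pre R' n)"
      by (simp add: pre_fbar[OF D(2)])
    also have "\<dots> \<longleftrightarrow> pre R n = pre R' n" using D(1) by (simp add: bij_is_inj inj_eq)
    finally show "pre (fbar f R) n = pre (fbar f R') n \<longleftrightarrow> pre R n = pre R' n" .
  qed
  then show ?thesis using b by (simp add: Iso00_def phi_def)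
qed

lemma phi_hom:
  assumes f: "f \<in> AutFL" and g: "g \<in> AutFL"
  shows "phi (f \<circ> g) = compose c00 (phi f) (phi g)"
proof -
  have "fbar g R \<in> c00" if "R \<in> c00" for R using AutFL_D(3)[OF g] that by blast
  then show ?thesis
    by (auto simp: phi_def compose_def fun_eq_iff fbar_comp[OF AutFL_D(2)[OF g]])
qed

lemma phi_inj: "inj_on phi AutFL"
proof (rule inj_onI)
  fix f g assume f: "f \<in> AutFL" and g: "g \<in> AutFL" and e: "phi f = phi g"
  show "f = g"
  proof
    fix t
    have "fbar f (ext0 t) = fbar g (ext0 t)"
      using e ext0_c00[of t] unfolding phi_def by (metis restrict_apply')
    then have "pre (fbar f (ext0 t)) (length t) = pre (fbar g (ext0 t)) (length t)" by simp
    then show "f t = g t"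
      by (simp add: pre_fbar AutFL_D(2)[OF f] AutFL_D(2)[OF g] pre_ext0)
  qed
qed

lemma phi_surj:
  assumes h: "h \<in> Iso00"
  shows "\<exists>f\<in>AutFL. phi f = h"
proof -
  note D = Iso00_D[OF h]
  have ag: "pre (h R) n = pre (h R') n \<longleftrightarrow> pre R n = pre R' n" if "R \<in> c00" "R' \<in> c00" for R R' n
    using dist_agree[OF D(3)[OF that]] by simp
  define f where "f t = pre (h (ext0 t)) (length t)" for t :: "nat list"
  have lenf: "length (f t) = length t" for t :: "nat list" by (simp add: f_def)
  have chr: "chronological f"
    unfolding chronological_def
  proof (intro allI conjI impI)
    fix t :: "nat list"
    show "length (f t) = length t" by (rule lenf)
  next
    fix t :: "nat list" and k assume k: "k \<le> length t"
    have "f (take k t) = pre (h (ext0 (take k t))) k" using k by (simp add: f_def)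
    also have "\<dots> = pre (h (ext0 t)) k"
      by (subst ag[OF ext0_c00 ext0_c00]) (rule pre_ext0_take[OF k])
    also have "\<dots> = take k (f t)" using k by (simp add: f_def take_pre)
    finally show "f (take k t) = take k (f t)" .
  qed
  have inj: "inj f"
  proof (rule injI)
    fix t t' :: "nat list" assume e: "f t = f t'"
    then have l: "length t = length t'" using lenf by metis
    then have "pre (h (ext0 t)) (length t) = pre (h (ext0 t')) (length t)" using e by (simp add: f_def)
    then have "pre (ext0 t) (length t) = pre (ext0 t') (length t')"
      using ag[OF ext0_c00 ext0_c00] l by simp
    then show "t = t'" using pre_ext0 l by metis
  qed
  have surj: "surj f"
    unfolding surj_def
  proof
    fix s :: "nat list"
    have "ext0 s \<in> h ` c00" using D(2) ext0_c00[of s] by (simp add: bij_betw_def)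
    then obtain R where R0: "ext0 s = h R" "R \<in> c00" by (rule imageE)
    then have R: "R \<in> c00" "h R = ext0 s" by simp_all
    let ?t = "pre R (length s)"
    have "f ?t = pre (h (ext0 ?t)) (length s)" by (simp add: f_def)
    also have "\<dots> = pre (h R) (length s)"
      by (subst ag[OF ext0_c00 R(1)]) (rule pre_ext0_pre)
    also have "\<dots> = s" using R(2) pre_ext0 by simp
    finally have "f ?t = s" .
    then show "\<exists>x. s = f x" by (rule exI[of _ ?t, OF sym])
  qed
  have fb: "fbar f R = h R" if R: "R \<in> c00" for R
  proof
    fix n
    have "fbar f R n = pre (h (ext0 (pre R (Suc n)))) (Suc n) ! n"
      by (simp add: fbar_alt f_def)
    also have "pre (h (ext0 (pre R (Suc n)))) (Suc n) = pre (h R) (Suc n)"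
      by (subst ag[OF ext0_c00 R]) (rule pre_ext0_pre)
    finally show "fbar f R n = h R n" by (simp add: pre_nth)
  qed
  have "fbar f ` c00 = h ` c00" by (rule image_cong[OF refl fb])
  also have "\<dots> = c00" using D(2) by (simp add: bij_betw_def)
  finally have "f \<in> AutFL" using chr inj surj by (simp add: AutFL_def bij_def)
  moreover have "phi f = h"
  proof
    fix R show "phi f R = h R"
    proof (cases "R \<in> c00")
      case True then show ?thesis using fb by (simp add: phi_def)
    next
      case False then show ?thesis using D(1) by (simp add: phi_def extensional_def)
    qed
  qed
  ultimately show ?thesis by blast
qed

theorem mainTheorem19:
  shows "group AutFL_group \<and> group Iso00_group \<and>
         (\<forall>f\<in>AutFL. phi f \<in> Iso00) \<and>
         phi \<in> iso AutFL_group Iso00_group"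
proof (intro conjI ballI)
  show "group AutFL_group" by (rule group_AutFL)
  show "group Iso00_group" by (rule group_Iso00)
  show "phi f \<in> Iso00" if "f \<in> AutFL" for f using phi_Iso00[OF that] .
  have hom: "phi \<in> hom AutFL_group Iso00_group"
    by (auto simp: hom_def AutFL_group_def Iso00_group_def phi_Iso00 phi_hom)
  have "phi ` AutFL = Iso00" using phi_Iso00 phi_surj by blast
  then have "bij_betw phi AutFL Iso00" using phi_inj by (simp add: bij_betw_def)
  then show "phi \<in> iso AutFL_group Iso00_group"
    using hom by (simp add: iso_def AutFL_group_def Iso00_group_def)
qed

end
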